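(* Let $\Pi=(\mathsf A,\mathsf B)$ be a protocol. Then for every $\delta\in(0,\frac12]$ there exists a constant $c=c(\delta)>0$ (depending only on $\delta$) such that for every $\delta'\ge\delta$ and $\gamma>1$: $$\Pr_{\ell\leftarrow L_{(\mathsf A^{(1)}_\Pi,\mathsf B)}}\Big[\ell\in\mathrm{desc}\big(\mathrm{Unbal}_\Pi(\gamma)\setminus\overline{\mathrm{desc}}(\mathrm{Low}_\Pi(\delta',\mathsf A))\big)\Big]\le\frac{2}{\gamma^{c}}.$$
   Context: An $m$-round single-bit-message protocol $\Pi$ is identified with the complete binary tree of height $m$ (nodes are binary strings, leaves of length $m$), with control scheme, edge probabilities, output $\chi_\Pi:\text{leaves}\to\{0,1\}$, visit probabilities $v_\Pi(u)$, leaf distribution $L_\Pi$; $\Pi_u$ is the subprotocol under node $u$ and $\mathrm{val}(\Pi_u)$ its expected output (taken $0$ if $v_\Pi(u)=0$). The biased-continuation attacker $\mathsf A^{(1)}_\Pi$: at an $\mathsf A$-controlled node $u$ it samples $\ell\leftarrow L_\Pi$ conditioned on $\ell$ extending $u$ and $\chi_\Pi(\ell)=1$ (an arbitrary leaf under $u$ if impossible) and sends $\ell_{|u|+1}$. $\mathrm{Unbal}_\Pi(\gamma)=\{u\text{ non-leaf}: v_{(\mathsf A^{(1)}_\Pi,\mathsf B)}(u)\ge\gamma\cdot v_\Pi(u)\}$. $\mathrm{Low}_\Pi(\delta,\mathsf A)=\{u\text{ non-leaf, controlled by }\mathsf A:\mathrm{val}(\Pi_u)\le\delta\}$. $\mathrm{desc}(\mathcal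 S)$ is the set of nodes with an ancestor (possibly itself) in $\mathcal S$; $\overline{\mathrm{desc}}(\mathcal S)=\bigcup_{u\in\mathcal S}(\text{descendants of }u\text{ other than }u)$. *)

theory Defs
  imports Complex_Main "HOL-Library.Sublist"
begin

text \<open>An m-round single-bit-message protocol, identified with the complete binary
tree of height m.  Nodes are bool lists of length at most m, leaves have length m,
the children of u are u @ [False] and u @ [True].
  ctrlA u   : node u is controlled by party A (otherwise by B);
  eprob u   : probability of the edge from u to u @ [True] (edge to u @ [False]
              has probability 1 - eprob u);
  out l     : output of leaf l (True = 1).\<close>

record proto =
  depth :: nat
  ctrlA :: "bool list \<Rightarrow> bool"
  eprob :: "bool list \<Rightarrow> real"
  out   :: "bool list \<Rightarrow> bool"

definition valid_proto :: "proto \<Rightarrow> bool" where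
  "valid_proto P \<longleftrightarrow> (\<forall>u. length u < depth P \<longrightarrow> 0 \<le> eprob P u \<and> eprob P u \<le> 1)"

definition nodes :: "proto \<Rightarrow> bool list set" where
  "nodes P = {u. length u \<le> depth P}"

definition leaves :: "proto \<Rightarrow> bool list set" where
  "leaves P = {l. length l = depth P}"

definition leaves_under :: "proto \<Rightarrow> bool list \<Rightarrow> bool list set" where
  "leaves_under P u = {l. length l = depth P \<and> prefix u l}"

definition edge :: "(bool list \<Rightarrow> real) \<Rightarrow> bool list \<Rightarrow> bool \<Rightarrow> real" where
  "edge q u b = (if b then q u else 1 - q u)"

definition visit_q :: "(bool list \<Rightarrow> real) \<Rightarrow> bool list \<Rightarrow> real" where
  "visit_q q u = (\<Prod>i<length u. edge q (take i u) (u ! i))"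

definition visit :: "proto \<Rightarrow> bool list \<Rightarrow> real" where
  "visit P u = visit_q (eprob P) u"

text \<open>Expected output of the subprotocol P_u (0 if v_P(u) = 0): probability of
reaching leaf l from u, times output.\<close>
definition val :: "proto \<Rightarrow> bool list \<Rightarrow> real" where
  "val P u = (if visit P u = 0 then 0 else
     (\<Sum>l\<in>leaves_under P u.
        (\<Prod>i\<in>{length u..<depth P}. edge (eprob P) (take i l) (l ! i))
        * (if out P l then 1 else 0)))"

definition win_mass :: "proto \<Rightarrow> bool list \<Rightarrow> real" where
  "win_mass P u = (\<Sum>l\<in>leaves_under P u. visit P l * (if out P l then 1 else 0))"

text \<open>Edge probabilities of the execution (A^(1)_P, B) of the biased-continuation
attacker against honest B.  At an A-controlled node u it samples a leaf from L_P
conditioned on extending u and having output 1 and sends its next bit; if this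
conditioning is impossible, it uses an arbitrary leaf under u, modelled by an
arbitrary (possibly randomized) fallback fb u = probability of sending True.\<close>
definition att_eprob :: "proto \<Rightarrow> (bool list \<Rightarrow> real) \<Rightarrow> bool list \<Rightarrow> real" where
  "att_eprob P fb u =
     (if ctrlA P u then
        (if win_mass P u = 0 then fb u else win_mass P (u @ [True]) / win_mass P u)
      else eprob P u)"

definition visit_att :: "proto \<Rightarrow> (bool list \<Rightarrow> real) \<Rightarrow> bool list \<Rightarrow> real" where
  "visit_att P fb u = visit_q (att_eprob P fb) u"

definition Unbal :: "proto \<Rightarrow> (bool list \<Rightarrow> real) \<Rightarrow> real \<Rightarrow> bool list set" where
  "Unbal P fb \<gamma> = {u. length u < depth P \<and> visit_att P fb u \<ge> \<gamma> * visit P u}"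

definition Low :: "proto \<Rightarrow> real \<Rightarrow> bool list set" where
  "Low P \<delta> = {u. length u < depth P \<and> ctrlA P u \<and> val P u \<le> \<delta>}"

definition desc :: "proto \<Rightarrow> bool list set \<Rightarrow> bool list set" where
  "desc P S = {x \<in> nodes P. \<exists>u\<in>S. prefix u x}"

definition descbar :: "proto \<Rightarrow> bool list set \<Rightarrow> bool list set" where
  "descbar P S = {x \<in> nodes P. \<exists>u\<in>S. strict_prefix u x}"

end

theory Submission
  imports Defs "HOL-Analysis.Convex"
begin

lemma edge_sum: "edge q u False + edge q u True = 1"
  by (simp add: edge_def)

lemma visit_q_snoc: "visit_q q (u@[b]) = visit_q q u * edge q u b"
proof -
  have "(\<Prod>i<length u. edge q (take i (u@[b])) ((u@[b]) ! i)) = visit_q q u"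
    unfolding visit_q_def by (rule prod.cong) (auto simp: nth_append)
  then show ?thesis unfolding visit_q_def by (simp add: mult.commute)
qed

lemma visit_q_prefix:
  assumes "prefix u l"
  shows "visit_q q l = visit_q q u * (\<Prod>i\<in>{length u..<length l}. edge q (take i l) (l!i))"
proof -
  obtain zs where l: "l = u @ zs" using assms prefix_def by blast
  have len: "length u \<le> length l" using l by simp
  have "{..<length l} = {..<length u} \<union> {length u..<length l}" using len by auto
  then have "visit_q q l = (\<Prod>i<length u. edge q (take i l) (l!i)) * (\<Prod>i\<in>{length u..<length l}. edge q (take i l) (l!i))"
    unfolding visit_q_def by (simp only: \<open>{..<length l} = _\<close> prod.union_disjoint[OF finite_lessThan finite_atLeastLessThan] ivl_disj_int_one(2)) 
  moreover have "(\<Prod>i<length u. edge q (take i l) (l!i)) = visit_q q u"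
    unfolding visit_q_def l by (rule prod.cong) (auto simp: nth_append)
  ultimately show ?thesis by simp
qed

lemma finite_leaves_under: "finite (leaves_under P u)"
proof -
  have "leaves_under P u \<subseteq> {xs. set xs \<subseteq> UNIV \<and> length xs = depth P}"
    unfolding leaves_under_def by auto
  moreover have "finite {xs::bool list. set xs \<subseteq> UNIV \<and> length xs = depth P}"
    by (rule finite_lists_length_eq) simp
  ultimately show ?thesis by (rule finite_subset)
qed

lemma leaves_under_split:
  assumes "length u < depth P"
  shows "leaves_under P u = leaves_under P (u@[False]) \<union> leaves_under P (u@[True])"
proof
  show "leaves_under P u \<subseteq> leaves_under P (u@[False]) \<union> leaves_under P (u@[True])"
  proof
    fix l assume "l \<in> leaves_under P u"
    then have l: "length l = depth P" "prefix u l" unfolding leaves_under_def by auto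
    then obtain zs where zs: "l = u @ zs" using prefix_def by blast
    with l assms obtain z zs' where "zs = z # zs'" by (cases zs) auto
    then have "prefix (u@[z]) l" using zs by simp
    then show "l \<in> leaves_under P (u@[False]) \<union> leaves_under P (u@[True])"
      using l unfolding leaves_under_def by (cases z) auto
  qed
next
  show "leaves_under P (u@[False]) \<union> leaves_under P (u@[True]) \<subseteq> leaves_under P u"
    unfolding leaves_under_def using prefix_order.trans[of u "u@[_]"] by auto
qed

lemma leaves_under_disj: "leaves_under P (u@[False]) \<inter> leaves_under P (u@[True]) = {}"
  unfolding leaves_under_def prefix_def by auto

lemma sum_split:
  assumes "length u < depth P"
  shows "(\<Sum>l\<in>leaves_under P u. f l) = (\<Sum>l\<in>leaves_under P (u@[False]). f l) + (\<Sum>l\<in>leaves_under P (u@[True]). f l)"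
  using leaves_under_split[OF assms] leaves_under_disj finite_leaves_under
  by (simp add: sum.union_disjoint)

lemma leaves_under_leaf: "length u = depth P \<Longrightarrow> leaves_under P u = {u}"
  unfolding leaves_under_def prefix_def by auto

lemma sum_visit_leaves:
  "length u \<le> depth P \<Longrightarrow> (\<Sum>l\<in>leaves_under P u. visit_q q l) = visit_q q u"
proof (induction "depth P - length u" arbitrary: u)
  case 0
  then show ?case by (simp add: leaves_under_leaf)
next
  case (Suc k)
  then have lt: "length u < depth P" by simp
  have "(\<Sum>l\<in>leaves_under P u. visit_q q l) = visit_q q (u@[False]) + visit_q q (u@[True])"
    using Suc lt by (simp add: sum_split)
  also have "\<dots> = visit_q q u" by (simp add: visit_q_snoc edge_def algebra_simps)
  finally show ?case .
qed

lemma visit_q_nonneg: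
  assumes "\<forall>v. length v < depth P \<longrightarrow> 0 \<le> q v \<and> q v \<le> 1" "length u \<le> depth P"
  shows "0 \<le> visit_q q u"
  unfolding visit_q_def using assms by (auto intro!: prod_nonneg simp: edge_def)

lemma Bern: fixes t c :: real assumes "0 \<le> t" "0 \<le> c" "c \<le> 1" shows "t powr c \<le> 1 + c * (t - 1)"
proof (cases "t = 0")
  case True then show ?thesis using assms by simp
next
  case False
  have "t powr c * 1 powr (1-c) \<le> c * t + (1-c) * 1"
    using assms False by (intro Youngs_inequality_0) auto
  then show ?thesis by (simp add: algebra_simps)
qed

lemma poly_id: "y*(x + c*(y-x))*(2-y) - x^2*(2-x) - ((1+c)*x*(2-x) - x^2)*(y-x)
   = (y-x)^2*(2*c - (1+c)*x - c*y)" for x y c :: real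
  by (simp add: power2_eq_square algebra_simps)


lemma visit_snoc: "visit P (u@[b]) = visit P u * edge (eprob P) u b"
  unfolding visit_def by (rule visit_q_snoc)

lemma visit_att_snoc: "visit_att P fb (u@[b]) = visit_att P fb u * edge (att_eprob P fb) u b"
  unfolding visit_att_def by (rule visit_q_snoc)

lemma visit_nonneg: "valid_proto P \<Longrightarrow> length u \<le> depth P \<Longrightarrow> 0 \<le> visit P u"
  unfolding visit_def valid_proto_def by (rule visit_q_nonneg) auto

lemma wm_split: "length u < depth P \<Longrightarrow> win_mass P u = win_mass P (u@[False]) + win_mass P (u@[True])"
  unfolding win_mass_def by (rule sum_split)

lemma wm_nonneg: "valid_proto P \<Longrightarrow> 0 \<le> win_mass P u"
  unfolding win_mass_def leaves_under_def by (auto intro!: sum_nonneg visit_nonneg)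

lemma wm_le_visit: assumes "valid_proto P" "length u \<le> depth P" shows "win_mass P u \<le> visit P u"
proof -
  have "win_mass P u \<le> (\<Sum>l\<in>leaves_under P u. visit P l)"
    unfolding win_mass_def using assms
    by (intro sum_mono) (auto simp: leaves_under_def intro: visit_nonneg)
  also have "\<dots> = visit P u" unfolding visit_def using assms(2) by (rule sum_visit_leaves)
  finally show ?thesis .
qed

lemma wm_eq: "win_mass P u = visit P u * val P u"
proof (cases "visit P u = 0")
  case True
  have "win_mass P u = 0" unfolding win_mass_def
    by (rule sum.neutral) (auto simp: leaves_under_def visit_def visit_q_prefix True[unfolded visit_def])
  then show ?thesis using True by simp
next
  case False
  have "win_mass P u = (\<Sum>l\<in>leaves_under P u. visit P u *
        ((\<Prod>i\<in>{length u..<depth P}. edge (eprob P) (take i l) (l ! i)) * (if out P l then 1 else 0)))"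
    unfolding win_mass_def
    by (rule sum.cong) (auto simp: leaves_under_def visit_def visit_q_prefix)
  then show ?thesis using False unfolding val_def by (simp add: sum_distrib_left)
qed

lemma val_bounds: assumes "valid_proto P" "length u \<le> depth P" shows "0 \<le> val P u" "val P u \<le> 1"
proof -
  have "0 \<le> val P u \<and> val P u \<le> 1"
  proof (cases "visit P u = 0")
    case True then show ?thesis by (simp add: val_def)
  next
    case False
    then have vp: "0 < visit P u" using visit_nonneg[OF assms] by simp
    have "val P u = win_mass P u / visit P u" using False by (simp add: wm_eq)
    then show ?thesis using vp wm_nonneg[OF assms(1)] wm_le_visit[OF assms]
      by (simp add: divide_le_eq_1)
  qed
  then show "0 \<le> val P u" "val P u \<le> 1" by auto
qed

lemma att_range:
  assumes "valid_proto P" "\<forall>u. length u < depth P \<longrightarrow> 0 \<le> fb u \<and> fb u \<le> 1" "length u < depth P"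
  shows "0 \<le> att_eprob P fb u \<and> att_eprob P fb u \<le> 1"
proof -
  have s: "win_mass P u = win_mass P (u@[False]) + win_mass P (u@[True])" using assms(3) by (rule wm_split)
  have n: "0 \<le> win_mass P (u@[False])" "0 \<le> win_mass P (u@[True])" using wm_nonneg[OF assms(1)] by auto
  show ?thesis using assms s n unfolding att_eprob_def valid_proto_def
    by (auto simp: divide_le_eq_1)
qed

lemma att_edge_A:
  assumes "ctrlA P u" "win_mass P u \<noteq> 0" "length u < depth P"
  shows "edge (att_eprob P fb) u b = win_mass P (u@[b]) / win_mass P u"
proof -
  have s: "win_mass P u = win_mass P (u@[False]) + win_mass P (u@[True])" using assms(3) by (rule wm_split)
  show ?thesis
  proof (cases b)
    case True then show ?thesis using assms unfolding att_eprob_def edge_def by simp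
  next
    case False
    then have "edge (att_eprob P fb) u b = 1 - win_mass P (u@[True]) / win_mass P u"
      using assms unfolding att_eprob_def edge_def by simp
    also have "\<dots> = (win_mass P u - win_mass P (u@[True])) / win_mass P u"
      using assms(2) by (simp add: diff_divide_distrib)
    also have "\<dots> = win_mass P (u@[b]) / win_mass P u" using s False by simp
    finally show ?thesis .
  qed
qed

lemma att_edge_B: "\<not> ctrlA P u \<Longrightarrow> edge (att_eprob P fb) u b = edge (eprob P) u b"
  unfolding att_eprob_def edge_def by auto

lemma visit_att_nonneg:
  assumes "valid_proto P" "\<forall>u. length u < depth P \<longrightarrow> 0 \<le> fb u \<and> fb u \<le> 1" "length u \<le> depth P"
  shows "0 \<le> visit_att P fb u"
  unfolding visit_att_def using att_range[OF assms(1,2)] assms(3) by (intro visit_q_nonneg) auto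

definition good :: "proto \<Rightarrow> real \<Rightarrow> bool list \<Rightarrow> bool" where
  "good P d u \<longleftrightarrow> (\<forall>a. strict_prefix a u \<longrightarrow> a \<notin> Low P d)"

lemma strict_prefix_snoc: "strict_prefix a (u@[b]) \<longleftrightarrow> prefix a u"
  by (auto simp: strict_prefix_def prefix_snoc)

lemma good_snoc: "good P d (u@[b]) \<longleftrightarrow> good P d u \<and> u \<notin> Low P d"
  unfolding good_def strict_prefix_snoc
  by (metis prefix_order.dual_order.strict_implies_order prefix_order.order_refl prefix_order.le_less)

lemma good_zero:
  assumes "valid_proto P" "0 < d"
  shows "length u \<le> depth P \<Longrightarrow> good P d u \<Longrightarrow> visit P u = 0 \<Longrightarrow> visit_att P fb u = 0"
proof (induction u rule: rev_induct)
  case Nil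
  then show ?case by (simp add: visit_def visit_q_def)
next
  case (snoc b u)
  have gu: "good P d u" and nl: "u \<notin> Low P d" using snoc.prems good_snoc by auto
  have lt: "length u < depth P" using snoc.prems by simp
  show ?case
  proof (cases "visit P u = 0")
    case True
    then show ?thesis using snoc.IH gu lt by (simp add: visit_att_snoc)
  next
    case False
    then have e0: "edge (eprob P) u b = 0" using snoc.prems(3) by (simp add: visit_snoc)
    show ?thesis
    proof (cases "ctrlA P u")
      case False
      then show ?thesis by (simp add: visit_att_snoc att_edge_B e0)
    next
      case True
      then have "val P u > d" using nl lt unfolding Low_def by auto
      then have "win_mass P u \<noteq> 0" using False assms(2) by (simp add: wm_eq)
      moreover have "win_mass P (u@[b]) = 0" using snoc.prems(3) by (simp add: wm_eq)
      ultimately show ?thesis using True lt by (simp add: visit_att_snoc att_edge_A)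
    qed
  qed
qed


lemma term_bound:
  fixes c x y :: real
  assumes "0 \<le> y" "y \<le> 1" "0 < c" "c \<le> 1" "2*c \<le> x" "x \<le> 1"
  shows "(y/x)*(y/x) powr c*(2-y) \<le> (x^2*(2-x) + ((1+c)*x*(2-x) - x^2)*(y-x)) / x^2"
proof -
  have xp: "0 < x" using assms by simp
  have a: "(y/x) powr c \<le> 1 + c*(y/x - 1)" using assms xp by (intro Bern) auto
  have b: "0 \<le> (y/x)*(2-y)" using assms xp by simp
  have "((y/x)*(2-y)) * (y/x) powr c \<le> ((y/x)*(2-y)) * (1 + c*(y/x - 1))"
    using mult_left_mono[OF a b] .
  then have "(y/x)*(y/x) powr c*(2-y) \<le> (y/x)*(1 + c*(y/x - 1))*(2-y)"
    by (simp only: mult_ac)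
  also have "\<dots> = y*(x + c*(y-x))*(2-y) / x^2" using xp by (simp add: field_simps power2_eq_square)
  also have "\<dots> \<le> (x^2*(2-x) + ((1+c)*x*(2-x) - x^2)*(y-x)) / x^2"
  proof (rule divide_right_mono)
    have "(y-x)^2*(2*c - (1+c)*x - c*y) \<le> 0"
    proof (rule mult_nonneg_nonpos)
      have "0 \<le> c*x" "0 \<le> c*y" using assms xp by simp_all
      moreover have "(1+c)*x = x + c*x" by (simp add: algebra_simps)
      ultimately show "2*c - (1+c)*x - c*y \<le> 0" using assms by linarith
    qed simp
    then show "y*(x + c*(y-x))*(2-y) \<le> x^2*(2-x) + ((1+c)*x*(2-x) - x^2)*(y-x)"
      using poly_id[of y x c] by linarith
  qed simp
  finally show ?thesis .
qed

lemma key_ineq: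
  fixes c x e0 e1 y0 y1 :: real
  assumes "0 < c" "c \<le> 1" "2*c \<le> x" "x \<le> 1" "0 \<le> e0" "0 \<le> e1" "e0 + e1 = 1"
    "0 \<le> y0" "y0 \<le> 1" "0 \<le> y1" "y1 \<le> 1" "e0*y0 + e1*y1 = x"
  shows "e0*((y0/x)*(y0/x) powr c*(2-y0)) + e1*((y1/x)*(y1/x) powr c*(2-y1)) \<le> 2 - x"
proof -
  define D where "D = (1+c)*x*(2-x) - x^2"
  have xp: "0 < x" using assms by simp
  have "e0*((y0/x)*(y0/x) powr c*(2-y0)) + e1*((y1/x)*(y1/x) powr c*(2-y1))
    \<le> e0*((x^2*(2-x) + D*(y0-x)) / x^2) + e1*((x^2*(2-x) + D*(y1-x)) / x^2)"
    unfolding D_def using assms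
    by (intro add_mono mult_left_mono term_bound) auto
  also have "\<dots> = ((e0+e1)*(x^2*(2-x)) + D*((e0*y0+e1*y1) - (e0+e1)*x)) / x^2"
    by (simp add: add_divide_distrib[symmetric] algebra_simps)
  also have "\<dots> = 2 - x" using assms xp by simp
  finally show ?thesis .
qed


definition Mf :: "proto \<Rightarrow> (bool list \<Rightarrow> real) \<Rightarrow> real \<Rightarrow> bool list \<Rightarrow> real" where
  "Mf P fb c u = (if visit P u = 0 then 0 else
     visit_att P fb u * (visit_att P fb u / visit P u) powr c * (2 - val P u))"

lemma Mf_nonneg:
  assumes "valid_proto P" "\<forall>u. length u < depth P \<longrightarrow> 0 \<le> fb u \<and> fb u \<le> 1" "length u \<le> depth P"
  shows "0 \<le> Mf P fb c u"
  using visit_att_nonneg[OF assms] val_bounds[OF assms(1,3)] unfolding Mf_def by auto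

lemma super:
  assumes vp: "valid_proto P" and fbr: "\<forall>u. length u < depth P \<longrightarrow> 0 \<le> fb u \<and> fb u \<le> 1"
    and c: "0 < c" "c \<le> 1" "2*c \<le> d"
    and lt: "length u < depth P" and gu: "good P d u" and nl: "u \<notin> Low P d"
  shows "Mf P fb c (u@[False]) + Mf P fb c (u@[True]) \<le> Mf P fb c u"
proof (cases "visit P u = 0")
  case True
  then show ?thesis by (simp add: Mf_def visit_snoc)
next
  case False
  have dp: "0 < d" using c by simp
  define v where "v = visit P u"
  define va where "va = visit_att P fb u"
  define R where "R = va / v"
  define x where "x = val P u"
  define e where "e = (\<lambda>b. edge (eprob P) u b)"
  define y where "y = (\<lambda>b. val P (u@[b]))"
  have vpos: "0 < v" using False visit_nonneg[OF vp, of u] lt unfolding v_def by linarith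
  have vanon: "0 \<le> va" unfolding va_def using visit_att_nonneg[OF vp fbr] lt by simp
  have Rnon: "0 \<le> R" unfolding R_def using vanon vpos by simp
  have e_nonneg: "0 \<le> e b" for b using vp lt unfolding e_def edge_def valid_proto_def by auto
  have esum: "e False + e True = 1" unfolding e_def by (rule edge_sum)
  have y_b: "0 \<le> y b" "y b \<le> 1" for b unfolding y_def using val_bounds[OF vp] lt by auto
  have x_b: "x \<le> 1" unfolding x_def using val_bounds[OF vp] lt by auto
  have wmb: "win_mass P (u@[b]) = v * e b * y b" for b
    unfolding y_def e_def v_def by (simp add: wm_eq visit_snoc)
  have xsum: "e False * y False + e True * y True = x"
  proof -
    have "v * x = v * e False * y False + v * e True * y True"
      using wm_split[OF lt] wmb unfolding x_def v_def by (simp add: wm_eq)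
    then have "v * x = v * (e False * y False + e True * y True)" by (simp add: algebra_simps)
    then show ?thesis using vpos by simp
  qed
  have MfU: "Mf P fb c u = va * R powr c * (2 - x)"
    using False unfolding Mf_def va_def R_def x_def v_def by simp
  show ?thesis
  proof (cases "ctrlA P u")
    case False
    have ch: "Mf P fb c (u@[b]) = va * R powr c * (e b * (2 - y b))" for b
    proof (cases "e b = 0")
      case True then show ?thesis unfolding Mf_def by (simp add: visit_snoc e_def)
    next
      case ne: False
      have "visit P (u@[b]) = v * e b" unfolding v_def e_def by (simp add: visit_snoc)
      moreover have "visit_att P fb (u@[b]) = va * e b"
        unfolding va_def e_def using False by (simp add: visit_att_snoc att_edge_B)
      ultimately show ?thesis unfolding Mf_def R_def y_def using ne vpos by (simp add: algebra_simps)
    qed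
    have "Mf P fb c (u@[False]) + Mf P fb c (u@[True]) = va * R powr c * (2*(e False + e True) - (e False * y False + e True * y True))"
      by (simp add: ch algebra_simps)
    also have "\<dots> = Mf P fb c u" using esum xsum MfU by simp
    finally show ?thesis by simp
  next
    case True
    have xd: "d < x" using True nl lt unfolding Low_def x_def by auto
    then have xpos: "0 < x" using dp by simp
    have wmu: "win_mass P u = v * x" unfolding v_def x_def by (simp add: wm_eq)
    then have wmne: "win_mass P u \<noteq> 0" using vpos xpos by simp
    define g where "g = (\<lambda>b. (y b/x)*(y b/x) powr c*(2-y b))"
    have ch: "Mf P fb c (u@[b]) = va * R powr c * (e b * g b)" for b
    proof (cases "e b = 0")
      case True then show ?thesis unfolding Mf_def by (simp add: visit_snoc e_def)
    next
      case ne: False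
      have vb: "visit P (u@[b]) = v * e b" unfolding v_def e_def by (simp add: visit_snoc)
      have ab: "edge (att_eprob P fb) u b = e b * y b / x"
        using att_edge_A[OF True wmne lt] wmb wmu vpos by simp
      have vab: "visit_att P fb (u@[b]) = va * (e b * y b / x)"
        unfolding va_def by (simp add: visit_att_snoc ab)
      have rat: "visit_att P fb (u@[b]) / visit P (u@[b]) = R * (y b / x)"
        unfolding vab vb R_def using ne vpos xpos by (simp add: field_simps)
      have pw: "(R * (y b / x)) powr c = R powr c * (y b / x) powr c"
        using powr_mult[of R "y b / x" c] Rnon y_b(1)[of b] xpos by simp
      show ?thesis unfolding Mf_def rat pw g_def using vb ne vpos
        by (simp add: vab y_def field_simps)
    qed
    have "e False * g False + e True * g True \<le> 2 - x"
      unfolding g_def using key_ineq[of c x "e False" "e True" "y False" "y True"] c xd x_b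
        e_nonneg esum y_b xsum by auto
    then have "va * R powr c * (e False * g False + e True * g True) \<le> va * R powr c * (2 - x)"
      using vanon by (intro mult_left_mono) auto
    then show ?thesis using ch MfU by (simp add: algebra_simps)
  qed
qed


lemma child_prefix:
  assumes "prefix u v" "v \<noteq> u" "prefix v l" "prefix (u@[b]) l"
  shows "prefix (u@[b]) v"
proof -
  obtain zs where v: "v = u @ zs" using assms(1) prefix_def by blast
  with assms(2) obtain z zs' where zs: "zs = z # zs'" by (cases zs) auto
  obtain ws where l: "l = v @ ws" using assms(3) prefix_def by blast
  obtain rs where l2: "l = u @ [b] @ rs" using assms(4) unfolding prefix_def by auto
  have "z = b" using l l2 v zs by simp
  then show ?thesis using v zs by simp
qed

lemma main_ind:
  assumes vp: "valid_proto P" and fbr: "\<forall>u. length u < depth P \<longrightarrow> 0 \<le> fb u \<and> fb u \<le> 1"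
    and c: "0 < c" "c \<le> 1" "2*c \<le> d" and g: "1 < \<gamma>"
  shows "length u \<le> depth P \<Longrightarrow> good P d u \<Longrightarrow>
    (\<Sum>l\<in>leaves_under P u. if (\<exists>v\<in>Unbal P fb \<gamma> - descbar P (Low P d). prefix u v \<and> prefix v l)
        then visit_att P fb l else 0) \<le> Mf P fb c u / \<gamma> powr c"
proof (induction "depth P - length u" arbitrary: u)
  case 0
  then have eq: "length u = depth P" by simp
  have "\<not> (\<exists>v\<in>Unbal P fb \<gamma> - descbar P (Low P d). prefix u v \<and> prefix v l)" for l
    using eq unfolding Unbal_def by (auto dest: prefix_length_le)
  then have "\<forall>l\<in>leaves_under P u. (if (\<exists>v\<in>Unbal P fb \<gamma> - descbar P (Low P d). prefix u v \<and> prefix v l)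
        then visit_att P fb l else 0) = 0" by auto
  then have "(\<Sum>l\<in>leaves_under P u. if (\<exists>v\<in>Unbal P fb \<gamma> - descbar P (Low P d). prefix u v \<and> prefix v l)
        then visit_att P fb l else 0) = 0" by (rule sum.neutral)
  then show ?case using Mf_nonneg[OF vp fbr 0(2), of c] g by simp
next
  case (Suc k)
  let ?G = "Unbal P fb \<gamma> - descbar P (Low P d)"
  let ?f = "\<lambda>u l. if (\<exists>v\<in>?G. prefix u v \<and> prefix v l) then visit_att P fb l else 0"
  have lt: "length u < depth P" using Suc by simp
  have gp: "0 < \<gamma> powr c" using g by simp
  have dp: "0 < d" using c by simp
  show ?case
  proof (cases "u \<in> ?G")
    case True
    have "(\<Sum>l\<in>leaves_under P u. ?f u l) \<le> (\<Sum>l\<in>leaves_under P u. visit_att P fb l)"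
      using visit_att_nonneg[OF vp fbr] by (intro sum_mono) (auto simp: leaves_under_def)
    also have "\<dots> = visit_att P fb u" unfolding visit_att_def using Suc(3) by (rule sum_visit_leaves)
    also have "\<dots> \<le> Mf P fb c u / \<gamma> powr c"
    proof (cases "visit P u = 0")
      case True
      then show ?thesis using good_zero[OF vp dp Suc(3,4)] Mf_nonneg[OF vp fbr Suc(3)] gp by simp
    next
      case False
      have vpos: "0 < visit P u" using False visit_nonneg[OF vp Suc(3)] by linarith
      have ub: "\<gamma> * visit P u \<le> visit_att P fb u" using \<open>u \<in> ?G\<close> unfolding Unbal_def by auto
      have R: "\<gamma> \<le> visit_att P fb u / visit P u" using ub vpos by (simp add: field_simps)
      have Rc: "\<gamma> powr c \<le> (visit_att P fb u / visit P u) powr c"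
        using R g c by (intro powr_mono2) auto
      have vl: "val P u \<le> 1" using val_bounds[OF vp Suc(3)] by simp
      have va: "0 \<le> visit_att P fb u" using visit_att_nonneg[OF vp fbr Suc(3)] .
      have "visit_att P fb u * \<gamma> powr c \<le> visit_att P fb u * (visit_att P fb u / visit P u) powr c * 1"
        using Rc va by (simp add: mult_left_mono)
      also have "\<dots> \<le> visit_att P fb u * (visit_att P fb u / visit P u) powr c * (2 - val P u)"
        using vl va by (intro mult_left_mono) auto
      also have "\<dots> = Mf P fb c u" using False unfolding Mf_def by simp
      finally show ?thesis using gp by (simp add: field_simps)
    qed
    finally show ?thesis .
  next
    case notG: False
    show ?thesis
    proof (cases "u \<in> Low P d")
      case True
      have "\<not> (\<exists>v\<in>?G. prefix u v \<and> prefix v l)" for l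
      proof
        assume "\<exists>v\<in>?G. prefix u v \<and> prefix v l"
        then obtain v where v: "v \<in> ?G" "prefix u v" by blast
        then have "v \<noteq> u" using notG by auto
        then have "strict_prefix u v" using v by (simp add: strict_prefix_def)
        moreover have "v \<in> nodes P" using v unfolding Unbal_def nodes_def by auto
        ultimately have "v \<in> descbar P (Low P d)" using True unfolding descbar_def by auto
        then show False using v by auto
      qed
      then have "\<forall>l\<in>leaves_under P u. ?f u l = 0" by auto
      then have "(\<Sum>l\<in>leaves_under P u. ?f u l) = 0" by (rule sum.neutral)
      then show ?thesis using Mf_nonneg[OF vp fbr Suc(3), of c] gp by simp
    next
      case nl: False
      have ch: "(\<Sum>l\<in>leaves_under P (u@[b]). ?f u l) \<le> Mf P fb c (u@[b]) / \<gamma> powr c" for b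
      proof -
        have "(\<Sum>l\<in>leaves_under P (u@[b]). ?f u l) = (\<Sum>l\<in>leaves_under P (u@[b]). ?f (u@[b]) l)"
        proof (rule sum.cong)
          fix l assume l: "l \<in> leaves_under P (u@[b])"
          then have pl: "prefix (u@[b]) l" unfolding leaves_under_def by auto
          have "(\<exists>v\<in>?G. prefix u v \<and> prefix v l) \<longleftrightarrow> (\<exists>v\<in>?G. prefix (u@[b]) v \<and> prefix v l)"
          proof
            assume "\<exists>v\<in>?G. prefix u v \<and> prefix v l"
            then obtain v where v: "v \<in> ?G" "prefix u v" "prefix v l" by blast
            then have "v \<noteq> u" using notG by auto
            then have "prefix (u@[b]) v" by (rule child_prefix[OF v(2) _ v(3) pl])
            then show "\<exists>v\<in>?G. prefix (u@[b]) v \<and> prefix v l" using v by blast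
          next
            assume "\<exists>v\<in>?G. prefix (u@[b]) v \<and> prefix v l"
            then show "\<exists>v\<in>?G. prefix u v \<and> prefix v l"
              by (meson prefix_order.trans prefixI)
          qed
          then show "?f u l = ?f (u@[b]) l" by simp
        qed simp
        also have "\<dots> \<le> Mf P fb c (u@[b]) / \<gamma> powr c"
          using Suc(1)[of "u@[b]"] Suc(2,3,4) nl lt good_snoc by auto
        finally show ?thesis .
      qed
      have "(\<Sum>l\<in>leaves_under P u. ?f u l) = (\<Sum>l\<in>leaves_under P (u@[False]). ?f u l) + (\<Sum>l\<in>leaves_under P (u@[True]). ?f u l)"
        using lt by (rule sum_split)
      also have "\<dots> \<le> Mf P fb c (u@[False]) / \<gamma> powr c + Mf P fb c (u@[True]) / \<gamma> powr c"
        by (rule add_mono[OF ch[of False] ch[of True]])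
      also have "\<dots> \<le> Mf P fb c u / \<gamma> powr c"
        using super[OF vp fbr c lt Suc(4) nl] gp by (simp add: add_divide_distrib[symmetric] divide_right_mono)
      finally show ?thesis .
    qed
  qed
qed

theorem lemma4p7:
  fixes \<delta> :: real
  assumes "0 < \<delta>" and "\<delta> \<le> 1/2"
  shows "\<exists>c>0. \<forall>(P::proto) (fb::bool list \<Rightarrow> real) (\<delta>'::real) (\<gamma>::real).
           valid_proto P \<longrightarrow> (\<forall>u. length u < depth P \<longrightarrow> 0 \<le> fb u \<and> fb u \<le> 1) \<longrightarrow>
           \<delta> \<le> \<delta>' \<longrightarrow> 1 < \<gamma> \<longrightarrow>
           (\<Sum>l\<in>leaves P \<inter> desc P (Unbal P fb \<gamma> - descbar P (Low P \<delta>')).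
               visit_att P fb l) \<le> 2 / \<gamma> powr c"
proof (intro exI[of _ "\<delta>/2"] conjI allI impI)
  show "0 < \<delta>/2" using assms by simp
  fix P :: proto and fb :: "bool list \<Rightarrow> real" and d g :: real
  assume vp: "valid_proto P" and fbr: "\<forall>u. length u < depth P \<longrightarrow> 0 \<le> fb u \<and> fb u \<le> 1"
    and dd: "\<delta> \<le> d" and g: "1 < g"
  let ?c = "\<delta>/2"
  let ?G = "Unbal P fb g - descbar P (Low P d)"
  have gp: "0 < g powr ?c" using g by simp
  have seteq: "leaves P \<inter> desc P ?G = {l \<in> leaves_under P []. \<exists>v\<in>?G. prefix [] v \<and> prefix v l}"
    unfolding leaves_def desc_def nodes_def leaves_under_def by auto
  have "(\<Sum>l\<in>leaves P \<inter> desc P ?G. visit_att P fb l)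
      = (\<Sum>l\<in>leaves_under P []. if (\<exists>v\<in>?G. prefix [] v \<and> prefix v l) then visit_att P fb l else 0)"
    unfolding seteq by (rule sum.inter_filter[OF finite_leaves_under])
  also have "\<dots> \<le> Mf P fb ?c [] / g powr ?c"
    using assms dd g by (intro main_ind[OF vp fbr]) (auto simp: good_def)
  also have "\<dots> \<le> 2 / g powr ?c"
  proof (rule divide_right_mono)
    have "visit P [] = 1" "visit_att P fb [] = 1"
      by (simp_all add: visit_def visit_att_def visit_q_def)
    then show "Mf P fb ?c [] \<le> 2" unfolding Mf_def using val_bounds(1)[OF vp, of "[]"] by simp
  qed (use gp in simp)
  finally show "(\<Sum>l\<in>leaves P \<inter> desc P ?G. visit_att P fb l) \<le> 2 / g powr ?c" .
qed

end
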